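(* Let $\alpha\in\mathbb{R}$, let $\mathbb{Q}[x]^+_{x=\alpha}=\{p\in\mathbb{Q}[x]: p(\alpha)>0\}$, and suppose $\mathbb{Q}[x]^+_{x=\alpha}=H_1\sqcup H_2$ with $H_1,H_2$ disjoint nonempty subsets, each closed under addition and multiplication. Then for every $N\ge 2$ and $i=1,2$, the set $H_i\cap\mathbb{Q}[x]^{<N}$ is not contained in any proper $\mathbb{Q}$-linear subspace of $\mathbb{Q}[x]^{<N}$, where $\mathbb{Q}[x]^{<N}$ denotes the $\mathbb{Q}$-vector space of rational polynomials of degree less than $N$. *)

theory Defs
  imports Complex_Main "HOL-Computational_Algebra.Polynomial"
begin

definition pos_at :: "real \<Rightarrow> rat poly set" where
  "pos_at \<alpha> = {p. poly (map_poly of_rat p) \<alpha> > 0}"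

text \<open>The Q-vector space of rational polynomials of degree less than N
  (the zero polynomial has degree 0 in Isabelle, so it is included for N >= 1).\<close>
definition polys_below :: "nat \<Rightarrow> rat poly set" where
  "polys_below N = {p. degree p < N}"

end

theory Submission
  imports Defs
begin

lemma mp_add: "map_poly (of_rat::rat\<Rightarrow>real) (p+q) = map_poly of_rat p + map_poly of_rat q"
  by (intro poly_eqI) (simp add: coeff_map_poly of_rat_add)
lemma mp_mult: "map_poly (of_rat::rat\<Rightarrow>real) (p*q) = map_poly of_rat p * map_poly of_rat q"
  by (intro poly_eqI) (simp add: coeff_map_poly coeff_mult of_rat_sum of_rat_mult)
lemma mp_smult: "map_poly (of_rat::rat\<Rightarrow>real) (smult c p) = smult (of_rat c) (map_poly of_rat p)"
  by (intro poly_eqI) (simp add: coeff_map_poly of_rat_mult)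
lemma mp_diff: "map_poly (of_rat::rat\<Rightarrow>real) (p-q) = map_poly of_rat p - map_poly of_rat q"
  by (intro poly_eqI) (simp add: coeff_map_poly of_rat_diff)
lemma mp_pCons: "map_poly (of_rat::rat\<Rightarrow>real) (pCons a p) = pCons (of_rat a) (map_poly of_rat p)"
  by (simp add: map_poly_pCons)

lemma poly_module: "module (smult :: rat \<Rightarrow> rat poly \<Rightarrow> rat poly)"
  by unfold_locales (simp_all add: smult_add_right smult_add_left)

lemma decomp: fixes r :: "rat poly" assumes pe: "[:-\<beta>,1:] * r + [:pb:] = p"
  shows "p = [:pb - m*\<beta>, m:] + [:-\<beta>,1:] * (r - [:m:])"
proof -
  have e: "[:-\<beta>,1:] * [:m:] = [:-(\<beta>*m), m:]" by simp
  have f: "[:pb - m*\<beta>, m:] = [:pb:] + [:-(\<beta>*m), m:]" by (simp add: algebra_simps)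
  show ?thesis unfolding f right_diff_distrib e pe[symmetric] by (simp add: algebra_simps)
qed

lemma low_deg:
  fixes \<alpha> :: real and H H' :: "rat poly set"
  assumes U: "H \<union> H' = pos_at \<alpha>" and D: "H \<inter> H' = {}"
    and C: "\<And>p q. p \<in> H' \<Longrightarrow> q \<in> H' \<Longrightarrow> p + q \<in> H' \<and> p * q \<in> H'"
  shows "p \<in> H \<Longrightarrow> \<exists>h\<in>H. degree h \<le> 1"
proof (induction "degree p" arbitrary: p rule: less_induct)
  case less
  show ?case
  proof (cases "degree p \<le> 1")
    case True then show ?thesis using less.prems by blast
  next
    case False
    define E where "E = (\<lambda>p. poly (map_poly (of_rat::rat\<Rightarrow>real) p) \<alpha>)"
    have Ep: "E p > 0" using less.prems U by (auto simp: pos_at_def E_def)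
    define \<beta> :: rat where "\<beta> = of_int (\<lfloor>\<alpha>\<rfloor> - 1)"
    have b: "of_rat \<beta> < \<alpha>"
    proof -
      have "real_of_int \<lfloor>\<alpha>\<rfloor> \<le> \<alpha>" by (rule of_int_floor_le)
      then show ?thesis unfolding \<beta>_def by (simp only: of_rat_of_int_eq)
    qed
    define r where "r = synthetic_div p \<beta>"
    have pe: "[:-\<beta>,1:] * r + [:poly p \<beta>:] = p" unfolding r_def by (rule synthetic_div_correct')
    define c where "c = real_of_rat (poly p \<beta>)"
    have ab: "\<alpha> - of_rat \<beta> > 0" using b by simp
    have "(0 - c) / (\<alpha> - of_rat \<beta>) < (E p - c) / (\<alpha> - of_rat \<beta>)"
      using Ep ab by (intro divide_strict_right_mono) auto
    then obtain m :: rat where m1: "(0 - c) / (\<alpha> - of_rat \<beta>) < of_rat m"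
      and m2: "of_rat m < (E p - c) / (\<alpha> - of_rat \<beta>)"
      using of_rat_dense by blast
    have A1: "0 < c + of_rat m * (\<alpha> - of_rat \<beta>)" using m1 ab by (simp add: field_simps)
    have A2: "c + of_rat m * (\<alpha> - of_rat \<beta>) < E p" using m2 ab by (simp add: field_simps)
    define A where "A = [:poly p \<beta> - m*\<beta>, m:]"
    define l where "l = [:-\<beta>,1:]"
    define s where "s = r - [:m:]"
    have ps: "p = A + l * s" unfolding A_def l_def s_def by (rule decomp[OF pe])
    have EA: "E A = c + of_rat m * (\<alpha> - of_rat \<beta>)"
      unfolding A_def E_def c_def by (simp add: map_poly_pCons of_rat_diff of_rat_mult algebra_simps)
    have El: "E l = \<alpha> - of_rat \<beta>"
      unfolding l_def E_def by (simp add: mp_pCons of_rat_minus)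
    have Eps: "E p = E A + E l * E s"
      using arg_cong[OF ps, of E] unfolding E_def by (simp add: mp_add mp_mult)
    have Es: "E s > 0"
    proof -
      have "E l * E s > 0" using Eps EA A2 by linarith
      then show ?thesis using El ab by (simp add: zero_less_mult_iff)
    qed
    have inA: "A \<in> H \<union> H'" using EA A1 U by (auto simp: pos_at_def E_def)
    have inl: "l \<in> H \<union> H'" using El ab U by (auto simp: pos_at_def E_def)
    have ins: "s \<in> H \<union> H'" using Es U by (auto simp: pos_at_def E_def)
    have dA: "degree A \<le> 1" unfolding A_def by simp
    have dl: "degree l \<le> 1" unfolding l_def by simp
    have ds: "degree s < degree p"
    proof -
      have "degree s \<le> max (degree r) (degree [:m:])" unfolding s_def by (rule degree_diff_le_max)
      moreover have "degree r = degree p - 1" unfolding r_def by (rule degree_synthetic_div)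
      ultimately show ?thesis using False by simp
    qed
    show ?thesis
    proof (cases "A \<in> H \<or> l \<in> H")
      case True then show ?thesis using dA dl by blast
    next
      case F2: False
      show ?thesis
      proof (cases "s \<in> H")
        case True then show ?thesis using less.hyps[OF ds] by blast
      next
        case False
        then have "s \<in> H'" "A \<in> H'" "l \<in> H'" using F2 inA inl ins by auto
        then have "l * s \<in> H'" using C by blast
        then have "A + l * s \<in> H'" using C \<open>A \<in> H'\<close> by blast
        then have "p \<in> H'" using ps by simp
        then show ?thesis using less.prems D by blast
      qed
    qed
  qed
qed

theorem lemma4p5:
  fixes \<alpha> :: real and H1 H2 :: "rat poly set"
  assumes union: "H1 \<union> H2 = pos_at \<alpha>"
    and disj: "H1 \<inter> H2 = {}"
    and ne1: "H1 \<noteq> {}" and ne2: "H2 \<noteq> {}"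
    and closed1: "\<And>p q. p \<in> H1 \<Longrightarrow> q \<in> H1 \<Longrightarrow> p + q \<in> H1 \<and> p * q \<in> H1"
    and closed2: "\<And>p q. p \<in> H2 \<Longrightarrow> q \<in> H2 \<Longrightarrow> p + q \<in> H2 \<and> p * q \<in> H2"
  shows "\<forall>N\<ge>2. \<forall>H\<in>{H1, H2}. \<forall>W.
           module.subspace (smult :: rat \<Rightarrow> rat poly \<Rightarrow> rat poly) W \<and>
           W \<subseteq> polys_below N \<and> H \<inter> polys_below N \<subseteq> W
           \<longrightarrow> W = polys_below N"
proof (intro allI impI ballI)
  interpret M: module "smult :: rat \<Rightarrow> rat poly \<Rightarrow> rat poly" by (rule poly_module)
  fix N :: nat and H W
  assume N: "N \<ge> 2" and H: "H \<in> {H1, H2}"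
    and W: "M.subspace W \<and> W \<subseteq> polys_below N \<and> H \<inter> polys_below N \<subseteq> W"
  obtain H' where U: "H \<union> H' = pos_at \<alpha>" and D: "H \<inter> H' = {}" and hne: "H \<noteq> {}"
    and C: "\<And>p q. p \<in> H' \<Longrightarrow> q \<in> H' \<Longrightarrow> p + q \<in> H' \<and> p * q \<in> H'"
    and CH: "\<And>p q. p \<in> H \<Longrightarrow> q \<in> H \<Longrightarrow> p + q \<in> H \<and> p * q \<in> H"
  proof (cases "H = H1")
    case True
    show ?thesis
    proof (rule that[of H2])
      show "H \<union> H2 = pos_at \<alpha>" using True union by simp
      show "H \<inter> H2 = {}" using True disj by simp
      show "H \<noteq> {}" using True ne1 by simp
      show "\<And>p q. p \<in> H2 \<Longrightarrow> q \<in> H2 \<Longrightarrow> p + q \<in> H2 \<and> p * q \<in> H2" by (rule closed2)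
      show "\<And>p q. p \<in> H \<Longrightarrow> q \<in> H \<Longrightarrow> p + q \<in> H \<and> p * q \<in> H"
        unfolding True by (rule closed1)
    qed
  next
    case False
    then have T: "H = H2" using H by blast
    show ?thesis
    proof (rule that[of H1])
      show "H \<union> H1 = pos_at \<alpha>" using T union by (simp add: Un_commute)
      show "H \<inter> H1 = {}" using T disj by (simp add: Int_commute)
      show "H \<noteq> {}" using T ne2 by simp
      show "\<And>p q. p \<in> H1 \<Longrightarrow> q \<in> H1 \<Longrightarrow> p + q \<in> H1 \<and> p * q \<in> H1" by (rule closed1)
      show "\<And>p q. p \<in> H \<Longrightarrow> q \<in> H \<Longrightarrow> p + q \<in> H \<and> p * q \<in> H"
        unfolding T by (rule closed2)
    qed
  qed
  obtain p where "p \<in> H" using hne by blast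
  then obtain h where hH: "h \<in> H" and dh: "degree h \<le> 1" using low_deg[OF U D C] by blast
  define E where "E = (\<lambda>p. poly (map_poly (of_rat::rat\<Rightarrow>real) p) \<alpha>)"
  have "h \<in> pos_at \<alpha>" using hH U by blast
  then have Eh: "E h > 0" unfolding pos_at_def E_def by simp
  have "h \<in> H \<inter> polys_below N" using hH dh N unfolding polys_below_def by simp
  then have hW: "h \<in> W" using W by blast
  have "polys_below N \<subseteq> W"
  proof
    fix q assume q: "q \<in> polys_below N"
    have "0 \<le> \<bar>E q\<bar>" by simp
    then have pq: "0 < \<bar>E q\<bar> + 1" by linarith
    have d0: "0 < E h / (\<bar>E q\<bar> + 1)" using Eh pq by (rule divide_pos_pos)
    obtain \<epsilon> :: rat where e01: "0 < real_of_rat \<epsilon> \<and> real_of_rat \<epsilon> < E h / (\<bar>E q\<bar> + 1)"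
      using of_rat_dense[OF d0] by blast
    have e0: "0 < real_of_rat \<epsilon>" using e01 by blast
    have e1: "real_of_rat \<epsilon> < E h / (\<bar>E q\<bar> + 1)" using e01 by blast
    have "of_rat \<epsilon> * (\<bar>E q\<bar> + 1) < E h" using e1 by (simp add: field_simps)
    then have "of_rat \<epsilon> * \<bar>E q\<bar> + of_rat \<epsilon> < E h" by (simp add: distrib_left)
    then have eb: "of_rat \<epsilon> * \<bar>E q\<bar> < E h" using e0 by linarith
    have "\<bar>of_rat \<epsilon> * E q\<bar> < E h" using eb e0 by (simp add: abs_mult)
    then have lt: "0 < E h + of_rat \<epsilon> * E q" "0 < E h - of_rat \<epsilon> * E q" by linarith+
    define h1 where "h1 = h + smult \<epsilon> q"
    define h2 where "h2 = h - smult \<epsilon> q"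
    have "E h1 = E h + of_rat \<epsilon> * E q" unfolding h1_def E_def by (simp add: mp_add mp_smult)
    then have i1: "h1 \<in> H \<union> H'" using lt U by (auto simp: pos_at_def E_def)
    have "E h2 = E h - of_rat \<epsilon> * E q" unfolding h2_def E_def by (simp add: mp_diff mp_smult)
    then have i2: "h2 \<in> H \<union> H'" using lt U by (auto simp: pos_at_def E_def)
    have dq: "degree q < N" using q by (simp add: polys_below_def)
    have dsq: "degree (smult \<epsilon> q) < N" using dq by (rule le_less_trans[OF degree_smult_le])
    have dh': "degree h < N" using dh N by simp
    have dh1: "degree h1 < N" unfolding h1_def using dh' dsq by (rule degree_add_less)
    have dh2: "degree h2 < N" unfolding h2_def using dh' dsq by (rule degree_diff_less)
    have hh: "h + h \<in> H" using CH hH by blast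
    have hs: "h1 + h2 = h + h" unfolding h1_def h2_def by simp
    have "h1 \<in> H \<or> h2 \<in> H"
    proof (rule ccontr)
      assume "\<not> (h1 \<in> H \<or> h2 \<in> H)"
      then have "h1 \<in> H'" "h2 \<in> H'" using i1 i2 by auto
      then have "h1 + h2 \<in> H'" using C by blast
      then show False using hh hs D by auto
    qed
    then have "smult \<epsilon> q \<in> W"
    proof
      assume "h1 \<in> H"
      then have "h1 \<in> W" using W dh1 by (auto simp: polys_below_def)
      then have "h1 - h \<in> W" using M.subspace_diff W hW by blast
      then show ?thesis unfolding h1_def by simp
    next
      assume "h2 \<in> H"
      then have "h2 \<in> W" using W dh2 by (auto simp: polys_below_def)
      then have "h - h2 \<in> W" using M.subspace_diff W hW by blast
      then show ?thesis unfolding h2_def by simp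
    qed
    then have "smult (1/\<epsilon>) (smult \<epsilon> q) \<in> W" using M.subspace_scale W by blast
    moreover have "\<epsilon> \<noteq> 0" using e0 by auto
    ultimately show "q \<in> W" by simp
  qed
  then show "W = polys_below N" using W by blast
qed

end
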